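(* Let $\{\varphi_\alpha\}$ be a net in $MA(G,\sigma)$ such that (i) $\varphi_\alpha\to1$ pointwise on $G$, (ii) $\sup_\alpha\|M_{\varphi_\alpha}\|<\infty$, and (iii) for each $\alpha$ there is $\kappa_\alpha:G\to[1,\infty)$ such that $G$ is $\kappa_\alpha$-decaying and $\|\varphi_\alpha\kappa_\alpha\|_\infty<\infty$. Then $\{\varphi_\alpha\}$ is a bounded Fourier summing net for $(G,\sigma)$.
   Context: $G$ is a discrete group, $\sigma:G\times G\to\mathbb{T}$ a normalized 2-cocycle ($\sigma(g,h)\sigma(gh,k)=\sigma(h,k)\sigma(g,hk)$, $\sigma(g,e)=\sigma(e,g)=1$); $\Lambda_\sigma(g)$ is the unitary on $\ell^2(G)$ with $(\Lambda_\sigma(g)\xi)(h)=\sigma(g,g^{-1}h)\xi(g^{-1}h)$, $\lambda=\Lambda_1$; $C^*_r(G,\sigma)$ is the operator-norm closure of $\mathrm{span}\,\Lambda_\sigma(G)$; for $x\in C^*_r(G,\sigma)$, $\widehat x=x\delta_e$. For $\varphi:G\to\mathbb{C}$, $M_\varphi$ is the linear map on $\mathrm{span}\,\Lambda_\sigma(G)$ with $M_\varphi(\Lambda_\sigma(g))=\varphi(g)\Lambda_\sigma(g)$; $\varphi\in MA(G,\sigma)$ if it is bounded in operator norm, and then $M_\varphi$ denotes the extension to $C^*_r(G,\sigma)$. $MCF(G,\sigma)$ is the set of $\varphi$ such that $\sum_g\varphi(g)\widehat x(g)\Lambda_\sigma(g)$ converges in operator norm for all $x$. A Fourier summing net for $(G,\sigma)$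 is a net $\{\varphi_\alpha\}\subseteq MCF(G,\sigma)$ with $M_{\varphi_\alpha}(x)\to x$ in norm for all $x\in C^*_r(G,\sigma)$; bounded means $\sup_\alpha\|M_{\varphi_\alpha}\|<\infty$. $\mathcal{K}(G)$ = finitely supported functions, $\pi_\lambda(f)=\sum_g f(g)\lambda(g)$; for $\kappa:G\to[1,\infty)$, $\|\xi\|_{2,\kappa}=\|\xi\kappa\|_2$, and $G$ is $\kappa$-decaying if $f\mapsto\pi_\lambda(f)$ is bounded from $(\mathcal{K}(G),\|\cdot\|_{2,\kappa})$ to $C^*_r(G,1)$ with operator norm. *)

theory Defs
  imports "HOL-Analysis.Analysis"
begin

text \<open>The discrete group G is a type of class group_add (written additively,
 not necessarily commutative): g h is g + h, e is 0, g inverse is - g.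
 Vectors are functions 'g \<Rightarrow> complex, operators are maps on such functions;
 only their behaviour on l2(G) matters.\<close>

type_synonym 'g vec = "'g \<Rightarrow> complex"
type_synonym 'g op = "'g vec \<Rightarrow> 'g vec"

definition l2 :: "'g vec \<Rightarrow> bool" where
  "l2 \<xi> \<longleftrightarrow> (\<lambda>h. (cmod (\<xi> h))\<^sup>2) summable_on UNIV"

definition l2norm :: "'g vec \<Rightarrow> real" where
  "l2norm \<xi> = sqrt (\<Sum>\<^sub>\<infinity>h. (cmod (\<xi> h))\<^sup>2)"

definition bounded_op :: "'g op \<Rightarrow> bool" where
  "bounded_op T \<longleftrightarrow>
     (\<forall>\<xi>. l2 \<xi> \<longrightarrow> l2 (T \<xi>)) \<and>
     (\<forall>\<xi> \<eta> c. l2 \<xi> \<longrightarrow> l2 \<eta> \<longrightarrow> T (\<lambda>h. \<xi> h + c * \<eta> h) = (\<lambda>h. T \<xi> h + c * T \<eta> h)) \<and>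
     (\<exists>C. \<forall>\<xi>. l2 \<xi> \<longrightarrow> l2norm (T \<xi>) \<le> C * l2norm \<xi>)"

definition opnorm :: "'g op \<Rightarrow> real" where
  "opnorm T = Sup {l2norm (T \<xi>) | \<xi>. l2 \<xi> \<and> l2norm \<xi> \<le> 1}"

definition op_diff :: "'g op \<Rightarrow> 'g op \<Rightarrow> 'g op" where
  "op_diff S T = (\<lambda>\<xi> h. S \<xi> h - T \<xi> h)"

definition cocycle :: "('g::group_add \<Rightarrow> 'g \<Rightarrow> complex) \<Rightarrow> bool" where
  "cocycle \<sigma> \<longleftrightarrow> (\<forall>g h. cmod (\<sigma> g h) = 1) \<and>
     (\<forall>g h k. \<sigma> g h * \<sigma> (g + h) k = \<sigma> h k * \<sigma> g (h + k)) \<and>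
     (\<forall>g. \<sigma> g 0 = 1 \<and> \<sigma> 0 g = 1)"

definition Lambda :: "('g::group_add \<Rightarrow> 'g \<Rightarrow> complex) \<Rightarrow> 'g \<Rightarrow> 'g op" where
  "Lambda \<sigma> g = (\<lambda>\<xi> h. \<sigma> g (- g + h) * \<xi> (- g + h))"

definition finsupp :: "('g \<Rightarrow> complex) \<Rightarrow> bool" where
  "finsupp f \<longleftrightarrow> finite {g. f g \<noteq> 0}"

definition pi_s :: "('g::group_add \<Rightarrow> 'g \<Rightarrow> complex) \<Rightarrow> ('g \<Rightarrow> complex) \<Rightarrow> 'g op" where
  "pi_s \<sigma> f = (\<lambda>\<xi> h. \<Sum>g\<in>{g. f g \<noteq> 0}. f g * Lambda \<sigma> g \<xi> h)"

definition Cr :: "('g::group_add \<Rightarrow> 'g \<Rightarrow> complex) \<Rightarrow> 'g op set" where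
  "Cr \<sigma> = {x. bounded_op x \<and>
      (\<forall>\<epsilon>>0. \<exists>f. finsupp f \<and> opnorm (op_diff x (pi_s \<sigma> f)) < \<epsilon>)}"

definition hat :: "'g::group_add op \<Rightarrow> 'g vec" where
  "hat x = x (\<lambda>h. if h = 0 then 1 else 0)"

definition MA :: "('g::group_add \<Rightarrow> 'g \<Rightarrow> complex) \<Rightarrow> ('g \<Rightarrow> complex) set" where
  "MA \<sigma> = {\<phi>. \<exists>C. \<forall>f. finsupp f \<longrightarrow>
      opnorm (pi_s \<sigma> (\<lambda>g. \<phi> g * f g)) \<le> C * opnorm (pi_s \<sigma> f)}"

definition Mnorm :: "('g::group_add \<Rightarrow> 'g \<Rightarrow> complex) \<Rightarrow> ('g \<Rightarrow> complex) \<Rightarrow> real" where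
  "Mnorm \<sigma> \<phi> = Sup {opnorm (pi_s \<sigma> (\<lambda>g. \<phi> g * f g)) | f. finsupp f \<and> opnorm (pi_s \<sigma> f) \<le> 1}"

text \<open>y is the value at x of the continuous extension of M_phi to C*_r(G,sigma).\<close>
definition is_Mext :: "('g::group_add \<Rightarrow> 'g \<Rightarrow> complex) \<Rightarrow> ('g \<Rightarrow> complex) \<Rightarrow> 'g op \<Rightarrow> 'g op \<Rightarrow> bool" where
  "is_Mext \<sigma> \<phi> x y \<longleftrightarrow> bounded_op y \<and>
     (\<forall>\<epsilon>>0. \<exists>\<delta>>0. \<forall>f. finsupp f \<longrightarrow> opnorm (op_diff x (pi_s \<sigma> f)) < \<delta> \<longrightarrow>
         opnorm (op_diff y (pi_s \<sigma> (\<lambda>g. \<phi> g * f g))) < \<epsilon>)"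

definition Mext :: "('g::group_add \<Rightarrow> 'g \<Rightarrow> complex) \<Rightarrow> ('g \<Rightarrow> complex) \<Rightarrow> 'g op \<Rightarrow> 'g op" where
  "Mext \<sigma> \<phi> x = (SOME y. is_Mext \<sigma> \<phi> x y)"

text \<open>MCF: sum_g phi(g) hat x(g) Lambda_sigma(g) converges in operator norm
  (as an unordered sum over G, i.e. along finite subsets) for every x.\<close>
definition MCF :: "('g::group_add \<Rightarrow> 'g \<Rightarrow> complex) \<Rightarrow> ('g \<Rightarrow> complex) set" where
  "MCF \<sigma> = {\<phi>. \<forall>x\<in>Cr \<sigma>. \<exists>y. bounded_op y \<and>
      (\<forall>\<epsilon>>0. \<exists>F. finite F \<and> (\<forall>F'. finite F' \<and> F \<subseteq> F' \<longrightarrow>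
         opnorm (op_diff y (\<lambda>\<xi> h. \<Sum>g\<in>F'. \<phi> g * hat x g * Lambda \<sigma> g \<xi> h)) < \<epsilon>))}"

definition directed :: "'i::preorder itself \<Rightarrow> bool" where
  "directed _ \<longleftrightarrow> (\<forall>a b::'i. \<exists>c. a \<le> c \<and> b \<le> c)"

definition fourier_summing_net ::
  "('g::group_add \<Rightarrow> 'g \<Rightarrow> complex) \<Rightarrow> ('i::preorder \<Rightarrow> 'g \<Rightarrow> complex) \<Rightarrow> bool" where
  "fourier_summing_net \<sigma> \<phi> \<longleftrightarrow> (\<forall>\<alpha>. \<phi> \<alpha> \<in> MCF \<sigma>) \<and>
     (\<forall>x\<in>Cr \<sigma>. \<forall>\<epsilon>>0. \<exists>\<alpha>0. \<forall>\<alpha>\<ge>\<alpha>0. opnorm (op_diff (Mext \<sigma> (\<phi> \<alpha>) x) x) < \<epsilon>)"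

definition bounded_fourier_summing_net ::
  "('g::group_add \<Rightarrow> 'g \<Rightarrow> complex) \<Rightarrow> ('i::preorder \<Rightarrow> 'g \<Rightarrow> complex) \<Rightarrow> bool" where
  "bounded_fourier_summing_net \<sigma> \<phi> \<longleftrightarrow> fourier_summing_net \<sigma> \<phi> \<and>
     (\<exists>C. \<forall>\<alpha>. Mnorm \<sigma> (\<phi> \<alpha>) \<le> C)"

text \<open>G is kappa-decaying (untwisted lambda = Lambda with trivial cocycle).\<close>
definition kappa_decaying :: "('g::group_add \<Rightarrow> real) \<Rightarrow> bool" where
  "kappa_decaying \<kappa> \<longleftrightarrow> (\<exists>C. \<forall>f. finsupp f \<longrightarrow>
      opnorm (pi_s (\<lambda>_ _. 1) f) \<le> C * l2norm (\<lambda>g. f g * complex_of_real (\<kappa> g)))"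

end

theory Submission
  imports Defs
begin

lemma l2norm_nonneg: "0 \<le> l2norm \<xi>"
  unfolding l2norm_def by (simp add: infsum_nonneg)

lemma l2_fin_le:
  assumes "l2 \<xi>" "finite F"
  shows "L2_set (\<lambda>h. cmod (\<xi> h)) F \<le> l2norm \<xi>"
proof -
  have "(\<Sum>h\<in>F. (cmod (\<xi> h))\<^sup>2) \<le> (\<Sum>\<^sub>\<infinity>h. (cmod (\<xi> h))\<^sup>2)"
    using assms unfolding l2_def by (intro finite_sum_le_infsum) auto
  then show ?thesis unfolding L2_set_def l2norm_def by simp
qed

lemma l2_from_fin:
  assumes "\<And>F. finite F \<Longrightarrow> L2_set (\<lambda>h. cmod (\<xi> h)) F \<le> B"
  shows "l2 \<xi> \<and> l2norm \<xi> \<le> B"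
proof -
  have B0: "0 \<le> B" using assms[of "{}"] by simp
  have S: "\<And>F. finite F \<Longrightarrow> (\<Sum>h\<in>F. (cmod (\<xi> h))\<^sup>2) \<le> B\<^sup>2"
  proof -
    fix F :: "'a set" assume "finite F"
    then have "sqrt (\<Sum>h\<in>F. (cmod (\<xi> h))\<^sup>2) \<le> B" using assms unfolding L2_set_def by auto
    also have "B = sqrt (B\<^sup>2)" using B0 by simp
    finally show "(\<Sum>h\<in>F. (cmod (\<xi> h))\<^sup>2) \<le> B\<^sup>2" by (simp only: real_sqrt_le_iff)
  qed
  have sm: "(\<lambda>h. (cmod (\<xi> h))\<^sup>2) summable_on UNIV"
    by (rule nonneg_bdd_above_summable_on) (auto intro!: bdd_aboveI[where M="B\<^sup>2"] S)
  have "(\<Sum>\<^sub>\<infinity>h. (cmod (\<xi> h))\<^sup>2) \<le> B\<^sup>2"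
    by (rule infsum_le_finite_sums[OF sm]) (use S in auto)
  then have "sqrt (\<Sum>\<^sub>\<infinity>h. (cmod (\<xi> h))\<^sup>2) \<le> sqrt (B\<^sup>2)" by (rule real_sqrt_le_mono)
  then have "l2norm \<xi> \<le> B" unfolding l2norm_def using B0 by simp
  with sm show ?thesis unfolding l2_def by auto
qed

lemma l2_cong_cmod:
  assumes "\<And>h. cmod (\<xi> h) = cmod (\<eta> h)"
  shows "l2 \<xi> = l2 \<eta>" "l2norm \<xi> = l2norm \<eta>"
  unfolding l2_def l2norm_def using assms by auto

lemma l2_mono:
  assumes "l2 \<eta>" "\<And>h. cmod (\<xi> h) \<le> r * cmod (\<eta> h)" "0 \<le> r"
  shows "l2 \<xi> \<and> l2norm \<xi> \<le> r * l2norm \<eta>"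
proof (rule l2_from_fin)
  fix F :: "'a set" assume F: "finite F"
  have "L2_set (\<lambda>h. cmod (\<xi> h)) F \<le> L2_set (\<lambda>h. r * cmod (\<eta> h)) F"
    by (rule L2_set_mono) (use assms in auto)
  also have "\<dots> = r * L2_set (\<lambda>h. cmod (\<eta> h)) F"
    using L2_set_right_distrib[OF assms(3)] by metis
  also have "\<dots> \<le> r * l2norm \<eta>" using l2_fin_le[OF assms(1) F] assms(3) by (simp add: mult_left_mono)
  finally show "L2_set (\<lambda>h. cmod (\<xi> h)) F \<le> r * l2norm \<eta>" .
qed

lemma l2_add:
  assumes "l2 \<xi>" "l2 \<eta>"
  shows "l2 (\<lambda>h. \<xi> h + \<eta> h) \<and> l2norm (\<lambda>h. \<xi> h + \<eta> h) \<le> l2norm \<xi> + l2norm \<eta>"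
proof (rule l2_from_fin)
  fix F :: "'a set" assume F: "finite F"
  have "L2_set (\<lambda>h. cmod (\<xi> h + \<eta> h)) F \<le> L2_set (\<lambda>h. cmod (\<xi> h) + cmod (\<eta> h)) F"
    by (rule L2_set_mono) (auto simp: norm_triangle_ineq)
  also have "\<dots> \<le> L2_set (\<lambda>h. cmod (\<xi> h)) F + L2_set (\<lambda>h. cmod (\<eta> h)) F"
    by (rule L2_set_triangle_ineq)
  also have "\<dots> \<le> l2norm \<xi> + l2norm \<eta>" using l2_fin_le[OF assms(1) F] l2_fin_le[OF assms(2) F] by simp
  finally show "L2_set (\<lambda>h. cmod (\<xi> h + \<eta> h)) F \<le> l2norm \<xi> + l2norm \<eta>" .
qed

lemma l2_scale:
  assumes "l2 \<xi>"
  shows "l2 (\<lambda>h. c * \<xi> h) \<and> l2norm (\<lambda>h. c * \<xi> h) \<le> cmod c * l2norm \<xi>"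
  by (rule l2_mono[OF assms]) (auto simp: norm_mult)

lemma l2_diff:
  assumes "l2 \<xi>" "l2 \<eta>"
  shows "l2 (\<lambda>h. \<xi> h - \<eta> h) \<and> l2norm (\<lambda>h. \<xi> h - \<eta> h) \<le> l2norm \<xi> + l2norm \<eta>"
proof -
  have "l2 (\<lambda>h. (-1) * \<eta> h)" "l2norm (\<lambda>h. (-1) * \<eta> h) \<le> l2norm \<eta>"
    using l2_scale[OF assms(2), of "-1"] by auto
  from l2_add[OF assms(1) this(1)] this(2) show ?thesis by simp
qed

lemma l2_point:
  assumes "l2 \<xi>"
  shows "cmod (\<xi> h) \<le> l2norm \<xi>"
proof -
  have "L2_set (\<lambda>h. cmod (\<xi> h)) {h} \<le> l2norm \<xi>" by (rule l2_fin_le[OF assms]) auto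
  then show ?thesis unfolding L2_set_def by simp
qed

lemma l2norm_zero_imp:
  assumes "l2 \<xi>" "l2norm \<xi> = 0"
  shows "\<xi> h = 0"
  using l2_point[OF assms(1), of h] assms(2) by simp

lemma l2_zero: "l2 (\<lambda>h. 0) \<and> l2norm (\<lambda>h. 0) = 0"
  unfolding l2_def l2norm_def by simp

lemma l2_zero_simps[simp]: "l2 (\<lambda>h. 0)" "l2norm (\<lambda>h. 0) = 0"
  using l2_zero by auto

lemma l2_finsupp:
  assumes "finite {h. \<xi> h \<noteq> 0}"
  shows "l2 \<xi>"
proof -
  let ?S = "{h. \<xi> h \<noteq> 0}"
  have "l2 \<xi> \<and> l2norm \<xi> \<le> L2_set (\<lambda>h. cmod (\<xi> h)) ?S"
  proof (rule l2_from_fin)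
    fix F :: "'a set" assume F: "finite F"
    have "L2_set (\<lambda>h. cmod (\<xi> h)) F = L2_set (\<lambda>h. cmod (\<xi> h)) (F \<inter> ?S)"
      unfolding L2_set_def by (rule arg_cong[where f=sqrt], rule sum.mono_neutral_right) (use F in auto)
    also have "\<dots> \<le> L2_set (\<lambda>h. cmod (\<xi> h)) ?S"
      unfolding L2_set_def by (intro real_sqrt_le_mono sum_mono2 assms) auto
    finally show "L2_set (\<lambda>h. cmod (\<xi> h)) F \<le> L2_set (\<lambda>h. cmod (\<xi> h)) ?S" .
  qed
  then show ?thesis by simp
qed

definition delta0 :: "'g::group_add vec" where "delta0 = (\<lambda>h. if h = 0 then 1 else 0)"

lemma l2_delta0: "l2 (delta0::'g::group_add vec) \<and> l2norm (delta0::'g vec) \<le> 1"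
proof (rule l2_from_fin)
  fix F :: "'g set" assume F: "finite F"
  have "(\<Sum>h\<in>F. (cmod (delta0 h))\<^sup>2) = (\<Sum>h\<in>F. (if h = 0 then 1 else 0::real))"
    unfolding delta0_def by (rule sum.cong) auto
  also have "\<dots> \<le> 1" using F by (simp add: sum.delta)
  finally show "L2_set (\<lambda>h. cmod (delta0 h)) F \<le> 1" unfolding L2_set_def by simp
qed

lemma l2_fatou:
  assumes l2s: "\<forall>\<^sub>F n in sequentially. l2 (\<xi>s n) \<and> l2norm (\<xi>s n) \<le> b n"
    and conv: "\<And>h. (\<lambda>n. \<xi>s n h) \<longlonglongrightarrow> \<xi> h"
    and bconv: "b \<longlonglongrightarrow> bl"
  shows "l2 \<xi> \<and> l2norm \<xi> \<le> bl"
proof (rule l2_from_fin)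
  fix F :: "'a set" assume F: "finite F"
  have lim: "(\<lambda>n. L2_set (\<lambda>h. cmod (\<xi>s n h)) F) \<longlonglongrightarrow> L2_set (\<lambda>h. cmod (\<xi> h)) F"
    unfolding L2_set_def by (intro tendsto_intros conv)
  have ev: "\<forall>\<^sub>F n in sequentially. L2_set (\<lambda>h. cmod (\<xi>s n h)) F \<le> b n"
  proof (rule eventually_mono[OF l2s])
    fix n assume "l2 (\<xi>s n) \<and> l2norm (\<xi>s n) \<le> b n"
    then show "L2_set (\<lambda>h. cmod (\<xi>s n h)) F \<le> b n" using l2_fin_le[of "\<xi>s n" F] F by linarith
  qed
  show "L2_set (\<lambda>h. cmod (\<xi> h)) F \<le> bl"
    by (rule tendsto_le[OF trivial_limit_sequentially bconv lim ev])
qed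


section \<open>Operators\<close>

lemma T0:
  assumes "bounded_op T"
  shows "T (\<lambda>h. 0) = (\<lambda>h. 0)"
proof -
  have "T (\<lambda>h. (\<lambda>h. 0) h + 1 * (\<lambda>h. 0) h) = (\<lambda>h. T (\<lambda>h. 0) h + 1 * T (\<lambda>h. 0) h)"
    using assms l2_zero unfolding bounded_op_def by blast
  then have "T (\<lambda>h. 0) = (\<lambda>h. T (\<lambda>h. 0) h + T (\<lambda>h. 0) h)" by simp
  then have "\<And>h. T (\<lambda>h. 0) h = T (\<lambda>h. 0) h + T (\<lambda>h. 0) h" by (metis (no_types))
  then show ?thesis by (intro ext) simp
qed

lemma T_scale:
  assumes "bounded_op T" "l2 \<xi>"
  shows "T (\<lambda>h. c * \<xi> h) = (\<lambda>h. c * T \<xi> h)"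
proof -
  have "T (\<lambda>h. (\<lambda>h. 0) h + c * \<xi> h) = (\<lambda>h. T (\<lambda>h. 0) h + c * T \<xi> h)"
    using assms l2_zero unfolding bounded_op_def by blast
  then show ?thesis using T0[OF assms(1)] by simp
qed

lemma bounded_op_l2: "bounded_op T \<Longrightarrow> l2 \<xi> \<Longrightarrow> l2 (T \<xi>)"
  unfolding bounded_op_def by blast

lemma opnorm_le:
  assumes "\<And>\<xi>. l2 \<xi> \<Longrightarrow> l2norm (T \<xi>) \<le> M * l2norm \<xi>" "0 \<le> M"
  shows "opnorm T \<le> M"
  unfolding opnorm_def
proof (rule cSup_least)
  have z: "l2 (\<lambda>h. 0)" "l2norm (\<lambda>h. 0) \<le> 1" by auto
  then show "{l2norm (T \<xi>) |\<xi>. l2 \<xi> \<and> l2norm \<xi> \<le> 1} \<noteq> {}" by blast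
next
  fix x assume "x \<in> {l2norm (T \<xi>) |\<xi>. l2 \<xi> \<and> l2norm \<xi> \<le> 1}"
  then obtain \<xi> where "x = l2norm (T \<xi>)" "l2 \<xi>" "l2norm \<xi> \<le> 1" by auto
  then show "x \<le> M" using assms(1)[of \<xi>] assms(2) mult_left_mono[of "l2norm \<xi>" 1 M] by auto
qed

lemma opnorm_bdd:
  assumes "bounded_op T"
  shows "bdd_above {l2norm (T \<xi>) |\<xi>. l2 \<xi> \<and> l2norm \<xi> \<le> 1}"
proof -
  obtain C where C: "\<And>\<xi>. l2 \<xi> \<Longrightarrow> l2norm (T \<xi>) \<le> C * l2norm \<xi>"
    using assms unfolding bounded_op_def by blast
  show ?thesis
  proof (rule bdd_aboveI[where M="max C 0"])
    fix x assume "x \<in> {l2norm (T \<xi>) |\<xi>. l2 \<xi> \<and> l2norm \<xi> \<le> 1}"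
    then obtain \<xi> where x: "x = l2norm (T \<xi>)" "l2 \<xi>" "l2norm \<xi> \<le> 1" by auto
    have "C * l2norm \<xi> \<le> max C 0 * l2norm \<xi>" using l2norm_nonneg[of \<xi>] by (simp add: mult_right_mono)
    also have "\<dots> \<le> max C 0" using x(3) l2norm_nonneg[of \<xi>] mult_left_mono[of "l2norm \<xi>" 1 "max C 0"] by auto
    finally show "x \<le> max C 0" using C[OF x(2)] x(1) by linarith
  qed
qed

lemma opnorm_upper:
  assumes "bounded_op T" "l2 \<xi>" "l2norm \<xi> \<le> 1"
  shows "l2norm (T \<xi>) \<le> opnorm T"
  unfolding opnorm_def by (rule cSup_upper[OF _ opnorm_bdd[OF assms(1)]]) (use assms in auto)

lemma opnorm_nonneg:
  assumes "bounded_op T"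
  shows "0 \<le> opnorm T"
proof -
  have "l2norm (T (\<lambda>h. 0)) \<le> opnorm T" by (rule opnorm_upper[OF assms]) auto
  then show ?thesis by (rule order_trans[OF l2norm_nonneg])
qed

lemma opnorm_bound:
  assumes "bounded_op T" "l2 \<xi>"
  shows "l2norm (T \<xi>) \<le> opnorm T * l2norm \<xi>"
proof (cases "l2norm \<xi> = 0")
  case True
  then have "\<xi> = (\<lambda>h. 0)" using l2norm_zero_imp[OF assms(2)] by auto
  then show ?thesis using T0[OF assms(1)] l2_zero True by simp
next
  case False
  define n where "n = l2norm \<xi>"
  have n: "n > 0" using False l2norm_nonneg[of \<xi>] unfolding n_def by auto
  define \<xi>' where "\<xi>' = (\<lambda>h. complex_of_real (1/n) * \<xi> h)"
  have c1: "cmod (complex_of_real (1/n)) * n = 1" using n by (simp add: norm_divide)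
  have 1: "l2 \<xi>'" "l2norm \<xi>' \<le> 1"
    using l2_scale[OF assms(2), of "complex_of_real (1/n)"] c1 unfolding \<xi>'_def n_def[symmetric] by auto
  have 2: "T \<xi>' = (\<lambda>h. complex_of_real (1/n) * T \<xi> h)" unfolding \<xi>'_def by (rule T_scale[OF assms])
  have 3: "T \<xi> = (\<lambda>h. complex_of_real n * T \<xi>' h)" unfolding 2 using n by auto
  have "l2norm (T \<xi>) \<le> n * l2norm (T \<xi>')"
    using l2_scale[OF bounded_op_l2[OF assms(1) 1(1)], of "complex_of_real n"] n unfolding 3 by auto
  also have "\<dots> \<le> n * opnorm T" using opnorm_upper[OF assms(1) 1] n by auto
  finally show ?thesis unfolding n_def by (simp add: mult.commute)
qed

lemma bounded_opI:
  assumes "\<And>\<xi>. l2 \<xi> \<Longrightarrow> l2 (T \<xi>)"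
    "\<And>\<xi> \<eta> c. l2 \<xi> \<Longrightarrow> l2 \<eta> \<Longrightarrow> T (\<lambda>h. \<xi> h + c * \<eta> h) = (\<lambda>h. T \<xi> h + c * T \<eta> h)"
    "\<And>\<xi>. l2 \<xi> \<Longrightarrow> l2norm (T \<xi>) \<le> C * l2norm \<xi>"
  shows "bounded_op T"
  unfolding bounded_op_def using assms by blast

lemma bounded_op_diff:
  fixes A B C :: "'g op"
  assumes "bounded_op A" "bounded_op B"
  shows "bounded_op (op_diff A B)"
proof (rule bounded_opI[where C="opnorm A + opnorm B"])
  fix \<xi> :: "'g vec" assume x: "l2 \<xi>"
  show "l2 (op_diff A B \<xi>)" unfolding op_diff_def
    using l2_diff[OF bounded_op_l2[OF assms(1) x] bounded_op_l2[OF assms(2) x]] by auto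
  have "l2norm (op_diff A B \<xi>) \<le> l2norm (A \<xi>) + l2norm (B \<xi>)" unfolding op_diff_def
    using l2_diff[OF bounded_op_l2[OF assms(1) x] bounded_op_l2[OF assms(2) x]] by auto
  also have "\<dots> \<le> opnorm A * l2norm \<xi> + opnorm B * l2norm \<xi>"
    using opnorm_bound[OF assms(1) x] opnorm_bound[OF assms(2) x] by linarith
  finally show "l2norm (op_diff A B \<xi>) \<le> (opnorm A + opnorm B) * l2norm \<xi>" by (simp add: algebra_simps)
next
  fix \<xi> \<eta> :: "'g vec" and c assume "l2 \<xi>" "l2 \<eta>"
  then show "op_diff A B (\<lambda>h. \<xi> h + c * \<eta> h) = (\<lambda>h. op_diff A B \<xi> h + c * op_diff A B \<eta> h)"
    using assms unfolding bounded_op_def op_diff_def by (auto simp: algebra_simps)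
qed

lemma bounded_op_scale:
  fixes T :: "'g op"
  assumes "bounded_op T"
  shows "bounded_op (\<lambda>\<xi> h. c * T \<xi> h)"
proof (rule bounded_opI[where C="cmod c * opnorm T"])
  fix \<xi> :: "'g vec" assume x: "l2 \<xi>"
  show "l2 (\<lambda>h. c * T \<xi> h)" using l2_scale[OF bounded_op_l2[OF assms x]] by auto
  have "l2norm (\<lambda>h. c * T \<xi> h) \<le> cmod c * l2norm (T \<xi>)" using l2_scale[OF bounded_op_l2[OF assms x]] by auto
  also have "\<dots> \<le> cmod c * (opnorm T * l2norm \<xi>)" using opnorm_bound[OF assms x] by (simp add: mult_left_mono)
  finally show "l2norm (\<lambda>h. c * T \<xi> h) \<le> cmod c * opnorm T * l2norm \<xi>" by (simp add: mult.assoc)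
next
  fix \<xi> \<eta> :: "'g vec" and d assume "l2 \<xi>" "l2 \<eta>"
  then show "(\<lambda>h. c * T (\<lambda>h. \<xi> h + d * \<eta> h) h) = (\<lambda>h. c * T \<xi> h + d * (c * T \<eta> h))"
    using assms unfolding bounded_op_def by (auto simp: algebra_simps)
qed

lemma opnorm_scale_le:
  fixes T :: "'g op"
  assumes "bounded_op T"
  shows "opnorm (\<lambda>\<xi> h. c * T \<xi> h) \<le> cmod c * opnorm T"
proof (rule opnorm_le)
  fix \<xi> :: "'g vec" assume x: "l2 \<xi>"
  have "l2norm (\<lambda>h. c * T \<xi> h) \<le> cmod c * l2norm (T \<xi>)" using l2_scale[OF bounded_op_l2[OF assms x]] by auto
  also have "\<dots> \<le> cmod c * (opnorm T * l2norm \<xi>)" using opnorm_bound[OF assms x] by (simp add: mult_left_mono)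
  finally show "l2norm (\<lambda>h. c * T \<xi> h) \<le> cmod c * opnorm T * l2norm \<xi>" by (simp add: mult.assoc)
qed (use opnorm_nonneg[OF assms] in auto)

lemma opnorm_triangle:
  fixes A B C :: "'g op"
  assumes "bounded_op A" "bounded_op B" "bounded_op C"
  shows "opnorm (op_diff A C) \<le> opnorm (op_diff A B) + opnorm (op_diff B C)"
proof (rule opnorm_le)
  fix \<xi> :: "'g vec" assume x: "l2 \<xi>"
  have AB: "bounded_op (op_diff A B)" and BC: "bounded_op (op_diff B C)"
    using bounded_op_diff assms by auto
  have e: "op_diff A C \<xi> = (\<lambda>h. op_diff A B \<xi> h + op_diff B C \<xi> h)" unfolding op_diff_def by auto
  have "l2norm (op_diff A C \<xi>) \<le> l2norm (op_diff A B \<xi>) + l2norm (op_diff B C \<xi>)"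
    unfolding e using l2_add[OF bounded_op_l2[OF AB x] bounded_op_l2[OF BC x]] by auto
  also have "\<dots> \<le> opnorm (op_diff A B) * l2norm \<xi> + opnorm (op_diff B C) * l2norm \<xi>"
    using opnorm_bound[OF AB x] opnorm_bound[OF BC x] by linarith
  finally show "l2norm (op_diff A C \<xi>) \<le> (opnorm (op_diff A B) + opnorm (op_diff B C)) * l2norm \<xi>"
    by (simp add: algebra_simps)
next
  show "0 \<le> opnorm (op_diff A B) + opnorm (op_diff B C)"
    using opnorm_nonneg bounded_op_diff assms by (metis add_nonneg_nonneg)
qed

lemma opnorm_sym: "opnorm (op_diff A B) = opnorm (op_diff B A)"
proof -
  have "\<And>\<xi>. l2norm (op_diff A B \<xi>) = l2norm (op_diff B A \<xi>)"
    unfolding op_diff_def by (rule l2_cong_cmod(2)) (simp add: norm_minus_commute)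
  then show ?thesis unfolding opnorm_def by simp
qed


section \<open>Twisted convolution by finitely supported functions\<close>

lemma shift_l2:
  fixes \<xi> :: "'g::group_add vec"
  shows "l2 (\<lambda>h. \<xi> (-g + h)) = l2 \<xi>" "l2norm (\<lambda>h. \<xi> (-g + h)) = l2norm \<xi>"
proof -
  have b: "bij_betw (\<lambda>h. -g + h) UNIV UNIV"
    by (rule bij_betw_byWitness[where f'="\<lambda>h. g + h"]) auto
  show "l2 (\<lambda>h. \<xi> (-g + h)) = l2 \<xi>" unfolding l2_def
    using summable_on_reindex_bij_betw[OF b, of "\<lambda>h. (cmod (\<xi> h))\<^sup>2"] by simp
  show "l2norm (\<lambda>h. \<xi> (-g + h)) = l2norm \<xi>" unfolding l2norm_def
    using infsum_reindex_bij_betw[OF b, of "\<lambda>h. (cmod (\<xi> h))\<^sup>2"] by simp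
qed

lemma Lambda_l2:
  assumes "cocycle \<sigma>" "l2 \<xi>"
  shows "l2 (Lambda \<sigma> g \<xi>) \<and> l2norm (Lambda \<sigma> g \<xi>) = l2norm \<xi>"
proof -
  have c: "\<And>h. cmod (Lambda \<sigma> g \<xi> h) = cmod (\<xi> (-g + h))"
    using assms(1) unfolding Lambda_def cocycle_def by (simp add: norm_mult)
  show ?thesis using l2_cong_cmod[of "Lambda \<sigma> g \<xi>" "\<lambda>h. \<xi> (-g + h)"] c shift_l2[of \<xi> g] assms(2) by simp
qed

lemma l2_sum:
  assumes "finite S" "\<And>g. g \<in> S \<Longrightarrow> l2 (v g) \<and> l2norm (v g) \<le> b g"
  shows "l2 (\<lambda>h. \<Sum>g\<in>S. v g h) \<and> l2norm (\<lambda>h. \<Sum>g\<in>S. v g h) \<le> sum b S"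
  using assms
proof (induction S rule: finite_induct)
  case empty
  then show ?case using l2_zero by simp
next
  case (insert a S)
  have IH: "l2 (\<lambda>h. \<Sum>g\<in>S. v g h) \<and> l2norm (\<lambda>h. \<Sum>g\<in>S. v g h) \<le> sum b S"
    using insert by auto
  have A: "l2 (v a) \<and> l2norm (v a) \<le> b a" using insert by auto
  have e: "(\<lambda>h. \<Sum>g\<in>insert a S. v g h) = (\<lambda>h. v a h + (\<Sum>g\<in>S. v g h))"
    using insert(1,2) by simp
  show ?case unfolding e using l2_add[of "v a" "\<lambda>h. \<Sum>g\<in>S. v g h"] IH A insert(1,2) by auto
qed

lemma finsupp_mult: "finsupp f \<Longrightarrow> finsupp (\<lambda>g. c g * f g)"
  unfolding finsupp_def by (rule finite_subset[rotated]) auto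

lemma finsupp_diff: "finsupp f \<Longrightarrow> finsupp f' \<Longrightarrow> finsupp (\<lambda>g. f g - f' g)"
  unfolding finsupp_def by (rule finite_subset[of _ "{g. f g \<noteq> 0} \<union> {g. f' g \<noteq> 0}"]) auto

lemma pi_s_eq:
  assumes "finsupp f" "finite S" "{g. f g \<noteq> 0} \<subseteq> S"
  shows "pi_s \<sigma> f \<xi> h = (\<Sum>g\<in>S. f g * Lambda \<sigma> g \<xi> h)"
  unfolding pi_s_def by (rule sum.mono_neutral_left) (use assms in auto)

lemma pi_s_bounded:
  assumes "cocycle \<sigma>" "finsupp f"
  shows "bounded_op (pi_s \<sigma> f)"
    "\<And>\<xi>. l2 \<xi> \<Longrightarrow> l2norm (pi_s \<sigma> f \<xi>) \<le> (\<Sum>g\<in>{g. f g \<noteq> 0}. cmod (f g)) * l2norm \<xi>"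
proof -
  let ?S = "{g. f g \<noteq> 0}"
  have fin: "finite ?S" using assms(2) unfolding finsupp_def .
  have main: "l2 (pi_s \<sigma> f \<xi>) \<and> l2norm (pi_s \<sigma> f \<xi>) \<le> (\<Sum>g\<in>?S. cmod (f g)) * l2norm \<xi>"
    if x: "l2 \<xi>" for \<xi>
  proof -
    have "l2 (\<lambda>h. \<Sum>g\<in>?S. f g * Lambda \<sigma> g \<xi> h) \<and>
      l2norm (\<lambda>h. \<Sum>g\<in>?S. f g * Lambda \<sigma> g \<xi> h) \<le> (\<Sum>g\<in>?S. cmod (f g) * l2norm \<xi>)"
    proof (rule l2_sum[OF fin])
      fix g
      have L: "l2 (Lambda \<sigma> g \<xi>) \<and> l2norm (Lambda \<sigma> g \<xi>) = l2norm \<xi>" by (rule Lambda_l2[OF assms(1) x])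
      show "l2 (\<lambda>h. f g * Lambda \<sigma> g \<xi> h) \<and> l2norm (\<lambda>h. f g * Lambda \<sigma> g \<xi> h) \<le> cmod (f g) * l2norm \<xi>"
        using l2_scale[of "Lambda \<sigma> g \<xi>" "f g"] L by auto
    qed
    moreover have "pi_s \<sigma> f \<xi> = (\<lambda>h. \<Sum>g\<in>?S. f g * Lambda \<sigma> g \<xi> h)" unfolding pi_s_def by simp
    ultimately show ?thesis by (simp add: sum_distrib_right)
  qed
  then show "\<And>\<xi>. l2 \<xi> \<Longrightarrow> l2norm (pi_s \<sigma> f \<xi>) \<le> (\<Sum>g\<in>?S. cmod (f g)) * l2norm \<xi>" by blast
  show "bounded_op (pi_s \<sigma> f)"
  proof (rule bounded_opI[where C="\<Sum>g\<in>?S. cmod (f g)"])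
    fix \<xi> \<eta> :: "'a vec" and c
    show "pi_s \<sigma> f (\<lambda>h. \<xi> h + c * \<eta> h) = (\<lambda>h. pi_s \<sigma> f \<xi> h + c * pi_s \<sigma> f \<eta> h)"
      unfolding pi_s_def Lambda_def
      by (auto simp: distrib_left sum.distrib sum_distrib_left mult.left_commute mult.assoc)
  qed (use main in auto)
qed

lemma pi_s_diff:
  assumes "finsupp f" "finsupp f'"
  shows "op_diff (pi_s \<sigma> f) (pi_s \<sigma> f') = pi_s \<sigma> (\<lambda>k. f k - f' k)"
proof (intro ext)
  fix \<xi> h
  let ?S = "{g. f g \<noteq> 0} \<union> {g. f' g \<noteq> 0}"
  have fin: "finite ?S" using assms unfolding finsupp_def by auto
  have "op_diff (pi_s \<sigma> f) (pi_s \<sigma> f') \<xi> h =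
     (\<Sum>g\<in>?S. f g * Lambda \<sigma> g \<xi> h) - (\<Sum>g\<in>?S. f' g * Lambda \<sigma> g \<xi> h)"
    unfolding op_diff_def using pi_s_eq[OF assms(1) fin] pi_s_eq[OF assms(2) fin] by auto
  also have "\<dots> = (\<Sum>g\<in>?S. (f g - f' g) * Lambda \<sigma> g \<xi> h)"
    by (simp add: sum_subtractf left_diff_distrib)
  also have "\<dots> = pi_s \<sigma> (\<lambda>k. f k - f' k) \<xi> h"
    by (rule pi_s_eq[symmetric, OF finsupp_diff[OF assms] fin]) auto
  finally show "op_diff (pi_s \<sigma> f) (pi_s \<sigma> f') \<xi> h = pi_s \<sigma> (\<lambda>k. f k - f' k) \<xi> h" .
qed

lemma pi_s_scale:
  assumes "finsupp f"
  shows "pi_s \<sigma> (\<lambda>g. c * f g) = (\<lambda>\<xi> h. c * pi_s \<sigma> f \<xi> h)"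
proof (intro ext)
  fix \<xi> h
  let ?S = "{g. f g \<noteq> 0}"
  have fin: "finite ?S" using assms unfolding finsupp_def by auto
  have "pi_s \<sigma> (\<lambda>g. c * f g) \<xi> h = (\<Sum>g\<in>?S. c * f g * Lambda \<sigma> g \<xi> h)"
    by (rule pi_s_eq[OF finsupp_mult[OF assms] fin]) auto
  also have "\<dots> = c * pi_s \<sigma> f \<xi> h" using pi_s_eq[OF assms fin, of \<sigma> \<xi> h]
    by (simp add: sum_distrib_left mult.assoc)
  finally show "pi_s \<sigma> (\<lambda>g. c * f g) \<xi> h = c * pi_s \<sigma> f \<xi> h" .
qed

lemma neg_add_zero_iff: "(-g + h = (0::'g::group_add)) \<longleftrightarrow> h = g"
  by (metis add_minus_cancel add.right_neutral minus_add_cancel)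

lemma pi_s_delta:
  assumes "cocycle \<sigma>" "finsupp f"
  shows "pi_s \<sigma> f delta0 = f"
proof (intro ext)
  fix h
  let ?S = "insert h {g. f g \<noteq> 0}"
  have fin: "finite ?S" using assms unfolding finsupp_def by auto
  have "pi_s \<sigma> f delta0 h = (\<Sum>g\<in>?S. f g * Lambda \<sigma> g delta0 h)"
    by (rule pi_s_eq[OF assms(2) fin]) auto
  also have "\<dots> = (\<Sum>g\<in>?S. if g = h then f h else 0)"
  proof (rule sum.cong)
    fix g assume "g \<in> ?S"
    show "f g * Lambda \<sigma> g delta0 h = (if g = h then f h else 0)"
      using assms(1) unfolding Lambda_def delta0_def cocycle_def
      by (auto simp: neg_add_zero_iff)
  qed simp
  also have "\<dots> = f h" using fin by simp
  finally show "pi_s \<sigma> f delta0 h = f h" .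
qed

lemma pi_s_zero: "pi_s \<sigma> (\<lambda>g. 0) = (\<lambda>\<xi> h. 0)"
  unfolding pi_s_def by simp

lemma cocycle_one: "cocycle (\<lambda>_ _. 1)"
  unfolding cocycle_def by simp

lemma pi_s_abs:
  fixes \<sigma> :: "'g::group_add \<Rightarrow> 'g \<Rightarrow> complex"
  assumes "cocycle \<sigma>" "finsupp f"
  shows "opnorm (pi_s \<sigma> f) \<le> opnorm (pi_s (\<lambda>_ _. 1) (\<lambda>g. complex_of_real (cmod (f g))))"
proof -
  let ?f1 = "\<lambda>g. complex_of_real (cmod (f g))"
  let ?S = "{g. f g \<noteq> 0}"
  have fin: "finite ?S" using assms unfolding finsupp_def by auto
  have S1: "{g. ?f1 g \<noteq> 0} = ?S" by auto
  have fs1: "finsupp ?f1" unfolding finsupp_def S1 by (rule fin)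
  have B1: "bounded_op (pi_s (\<lambda>_ _. 1) ?f1)" by (rule pi_s_bounded(1)[OF cocycle_one fs1])
  show ?thesis
  proof (rule opnorm_le)
    fix \<xi> :: "'g vec" assume x: "l2 \<xi>"
    let ?x1 = "\<lambda>h. complex_of_real (cmod (\<xi> h))"
    have x1: "l2 ?x1" "l2norm ?x1 = l2norm \<xi>" using l2_cong_cmod[of ?x1 \<xi>] x by auto
    have pt: "cmod (pi_s \<sigma> f \<xi> h) \<le> 1 * cmod (pi_s (\<lambda>_ _. 1) ?f1 ?x1 h)" for h
    proof -
      have "cmod (pi_s \<sigma> f \<xi> h) = cmod (\<Sum>g\<in>?S. f g * Lambda \<sigma> g \<xi> h)" unfolding pi_s_def by simp
      also have "\<dots> \<le> (\<Sum>g\<in>?S. cmod (f g * Lambda \<sigma> g \<xi> h))" by (rule norm_sum)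
      also have "\<dots> = (\<Sum>g\<in>?S. cmod (f g) * cmod (\<xi> (-g + h)))"
        using assms(1) unfolding Lambda_def cocycle_def by (simp add: norm_mult)
      also have "\<dots> = cmod (pi_s (\<lambda>_ _. 1) ?f1 ?x1 h)"
      proof -
        have e: "pi_s (\<lambda>_ _. 1) ?f1 ?x1 h = complex_of_real (\<Sum>g\<in>?S. cmod (f g) * cmod (\<xi> (-g + h)))"
          unfolding pi_s_def Lambda_def S1 by simp
        show ?thesis unfolding e norm_of_real by (intro abs_of_nonneg[symmetric] sum_nonneg) simp
      qed
      finally show ?thesis by simp
    qed
    have "l2norm (pi_s \<sigma> f \<xi>) \<le> 1 * l2norm (pi_s (\<lambda>_ _. 1) ?f1 ?x1)"
      using l2_mono[OF bounded_op_l2[OF B1 x1(1)] pt] by simp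
    also have "\<dots> \<le> opnorm (pi_s (\<lambda>_ _. 1) ?f1) * l2norm \<xi>"
      using opnorm_bound[OF B1 x1(1)] x1(2) by simp
    finally show "l2norm (pi_s \<sigma> f \<xi>) \<le> opnorm (pi_s (\<lambda>_ _. 1) ?f1) * l2norm \<xi>" .
  qed (rule opnorm_nonneg[OF B1])
qed



section \<open>Multipliers\<close>

lemma cauchy_bound:
  fixes u :: "nat \<Rightarrow> complex"
  assumes u: "\<And>m n. cmod (u m - u n) \<le> K * (b m + b n)" and b: "b \<longlonglongrightarrow> 0" and K: "0 \<le> K"
  shows "Cauchy u"
proof (rule CauchyI)
  fix e :: real assume e: "0 < e"
  have "0 < e / (2 * K + 2)" using e K by simp
  then have "\<forall>\<^sub>F n in sequentially. b n < e / (2 * K + 2)" by (rule order_tendstoD(2)[OF b])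
  then obtain M where M: "\<And>n. n \<ge> M \<Longrightarrow> b n < e / (2 * K + 2)" by (auto simp: eventually_sequentially)
  show "\<exists>M. \<forall>m\<ge>M. \<forall>n\<ge>M. cmod (u m - u n) < e"
  proof (intro exI allI impI)
    fix m n assume mn: "M \<le> m" "M \<le> n"
    have "cmod (u m - u n) \<le> K * (b m + b n)" by (rule u)
    also have "\<dots> \<le> K * (2 * (e / (2 * K + 2)))"
      using M[OF mn(1)] M[OF mn(2)] K by (intro mult_left_mono) auto
    also have "\<dots> < e" using K e by (simp add: field_simps)
    finally show "cmod (u m - u n) < e" .
  qed
qed

lemma MA_diff:
  assumes \<sigma>: "cocycle \<sigma>"
    and D: "\<And>f. finsupp f \<Longrightarrow> opnorm (pi_s \<sigma> (\<lambda>g. \<phi> g * f g)) \<le> D * opnorm (pi_s \<sigma> f)"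
    and f: "finsupp f" "finsupp f'"
  shows "opnorm (op_diff (pi_s \<sigma> (\<lambda>g. \<phi> g * f g)) (pi_s \<sigma> (\<lambda>g. \<phi> g * f' g)))
          \<le> D * opnorm (op_diff (pi_s \<sigma> f) (pi_s \<sigma> f'))"
proof -
  have "op_diff (pi_s \<sigma> (\<lambda>g. \<phi> g * f g)) (pi_s \<sigma> (\<lambda>g. \<phi> g * f' g))
      = pi_s \<sigma> (\<lambda>k. \<phi> k * f k - \<phi> k * f' k)"
    by (rule pi_s_diff[OF finsupp_mult[OF f(1)] finsupp_mult[OF f(2)]])
  also have "(\<lambda>k. \<phi> k * f k - \<phi> k * f' k) = (\<lambda>k. \<phi> k * (f k - f' k))" by (simp add: algebra_simps)
  finally have 1: "op_diff (pi_s \<sigma> (\<lambda>g. \<phi> g * f g)) (pi_s \<sigma> (\<lambda>g. \<phi> g * f' g))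
      = pi_s \<sigma> (\<lambda>k. \<phi> k * (f k - f' k))" .
  show ?thesis unfolding 1 pi_s_diff[OF f] by (rule D[OF finsupp_diff[OF f]])
qed

lemma MA_const:
  assumes \<sigma>: "cocycle \<sigma>" and "\<phi> \<in> MA \<sigma>"
  obtains D where "0 \<le> D" "\<And>f. finsupp f \<Longrightarrow> opnorm (pi_s \<sigma> (\<lambda>g. \<phi> g * f g)) \<le> D * opnorm (pi_s \<sigma> f)"
proof -
  obtain C where C: "\<And>f. finsupp f \<Longrightarrow> opnorm (pi_s \<sigma> (\<lambda>g. \<phi> g * f g)) \<le> C * opnorm (pi_s \<sigma> f)"
    using assms(2) unfolding MA_def by blast
  have "opnorm (pi_s \<sigma> (\<lambda>g. \<phi> g * f g)) \<le> \<bar>C\<bar> * opnorm (pi_s \<sigma> f)" if f: "finsupp f" for f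
  proof -
    have "C * opnorm (pi_s \<sigma> f) \<le> \<bar>C\<bar> * opnorm (pi_s \<sigma> f)"
      using opnorm_nonneg[OF pi_s_bounded(1)[OF \<sigma> f]] by (intro mult_right_mono) auto
    then show ?thesis using C[OF f] by linarith
  qed
  then show ?thesis using that[of "\<bar>C\<bar>"] by auto
qed

lemma Mext_exists:
  fixes \<sigma> :: "'g::group_add \<Rightarrow> 'g \<Rightarrow> complex"
  assumes \<sigma>: "cocycle \<sigma>" and D0: "0 \<le> D"
    and D: "\<And>f. finsupp f \<Longrightarrow> opnorm (pi_s \<sigma> (\<lambda>g. \<phi> g * f g)) \<le> D * opnorm (pi_s \<sigma> f)"
    and x: "x \<in> Cr \<sigma>"
  shows "\<exists>y. is_Mext \<sigma> \<phi> x y"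
proof -
  have xb: "bounded_op x" using x unfolding Cr_def by auto
  have "\<exists>f. finsupp f \<and> opnorm (op_diff x (pi_s \<sigma> f)) < inverse (real (Suc n))" for n
  proof -
    have "inverse (real (Suc n)) > 0" by simp
    then show ?thesis using x unfolding Cr_def by blast
  qed
  then obtain fs where fs: "\<And>n. finsupp (fs n)" "\<And>n. opnorm (op_diff x (pi_s \<sigma> (fs n))) < inverse (real (Suc n))"
    by metis
  define M where "M f = pi_s \<sigma> (\<lambda>g. \<phi> g * f g)" for f
  have Mb: "bounded_op (M f)" if "finsupp f" for f
    unfolding M_def by (rule pi_s_bounded(1)[OF \<sigma> finsupp_mult[OF that]])
  have pb: "bounded_op (pi_s \<sigma> f)" if "finsupp f" for f by (rule pi_s_bounded(1)[OF \<sigma> that])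
  have key: "l2 (op_diff (M (fs n)) (M f) \<xi>) \<and>
      l2norm (op_diff (M (fs n)) (M f) \<xi>) \<le> D * (inverse (real (Suc n)) + opnorm (op_diff x (pi_s \<sigma> f))) * l2norm \<xi>"
    if f: "finsupp f" and xi: "l2 \<xi>" for n f \<xi>
  proof -
    have B: "bounded_op (op_diff (M (fs n)) (M f))" by (rule bounded_op_diff[OF Mb[OF fs(1)] Mb[OF f]])
    have t: "opnorm (op_diff (pi_s \<sigma> (fs n)) (pi_s \<sigma> f))
        \<le> opnorm (op_diff (pi_s \<sigma> (fs n)) x) + opnorm (op_diff x (pi_s \<sigma> f))"
      by (rule opnorm_triangle[OF pb[OF fs(1)] xb pb[OF f]])
    have "opnorm (op_diff (M (fs n)) (M f)) \<le> D * opnorm (op_diff (pi_s \<sigma> (fs n)) (pi_s \<sigma> f))"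
      unfolding M_def by (rule MA_diff[OF \<sigma> D fs(1) f])
    also have "\<dots> \<le> D * (inverse (real (Suc n)) + opnorm (op_diff x (pi_s \<sigma> f)))"
      using t fs(2)[of n] opnorm_sym[of "pi_s \<sigma> (fs n)" x] D0 by (intro mult_left_mono) auto
    finally have o: "opnorm (op_diff (M (fs n)) (M f)) \<le> D * (inverse (real (Suc n)) + opnorm (op_diff x (pi_s \<sigma> f)))" .
    have "l2norm (op_diff (M (fs n)) (M f) \<xi>) \<le> opnorm (op_diff (M (fs n)) (M f)) * l2norm \<xi>"
      by (rule opnorm_bound[OF B xi])
    also have "\<dots> \<le> D * (inverse (real (Suc n)) + opnorm (op_diff x (pi_s \<sigma> f))) * l2norm \<xi>"
      using o l2norm_nonneg[of \<xi>] by (intro mult_right_mono) auto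
    finally show ?thesis using bounded_op_l2[OF B xi] by simp
  qed
  have cauchy: "Cauchy (\<lambda>n. M (fs n) \<xi> h)" if xi: "l2 \<xi>" for \<xi> h
  proof (rule cauchy_bound[where K="D * l2norm \<xi>" and b="\<lambda>n. inverse (real (Suc n))"])
    fix m n
    have "cmod (M (fs m) \<xi> h - M (fs n) \<xi> h) = cmod (op_diff (M (fs m)) (M (fs n)) \<xi> h)"
      unfolding op_diff_def by simp
    also have "\<dots> \<le> l2norm (op_diff (M (fs m)) (M (fs n)) \<xi>)"
      using key[OF fs(1) xi, of m n] l2_point[of "op_diff (M (fs m)) (M (fs n)) \<xi>" h] by blast
    also have "\<dots> \<le> D * (inverse (real (Suc m)) + opnorm (op_diff x (pi_s \<sigma> (fs n)))) * l2norm \<xi>"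
      using key[OF fs(1) xi, of m n] by blast
    also have "\<dots> \<le> D * (inverse (real (Suc m)) + inverse (real (Suc n))) * l2norm \<xi>"
      using fs(2)[of n] D0 l2norm_nonneg[of \<xi>] by (intro mult_right_mono mult_left_mono) auto
    finally show "cmod (M (fs m) \<xi> h - M (fs n) \<xi> h) \<le> D * l2norm \<xi> * (inverse (real (Suc m)) + inverse (real (Suc n)))"
      by (simp add: algebra_simps)
  qed (use LIMSEQ_inverse_real_of_nat D0 l2norm_nonneg[of \<xi>] in auto)
  define y where "y \<xi> h = lim (\<lambda>n. M (fs n) \<xi> h)" for \<xi> h
  have conv: "(\<lambda>n. M (fs n) \<xi> h) \<longlonglongrightarrow> y \<xi> h" if "l2 \<xi>" for \<xi> h
    using cauchy[OF that, of h] unfolding y_def by (simp add: Cauchy_convergent_iff convergent_LIMSEQ_iff)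
  have bnd: "l2 (op_diff y (M f) \<xi>) \<and> l2norm (op_diff y (M f) \<xi>) \<le> D * (0 + opnorm (op_diff x (pi_s \<sigma> f))) * l2norm \<xi>"
    if f: "finsupp f" and xi: "l2 \<xi>" for f \<xi>
  proof (rule l2_fatou[where \<xi>s="\<lambda>n. op_diff (M (fs n)) (M f) \<xi>"
        and b="\<lambda>n. D * (inverse (real (Suc n)) + opnorm (op_diff x (pi_s \<sigma> f))) * l2norm \<xi>"])
    show "\<forall>\<^sub>F n in sequentially. l2 (op_diff (M (fs n)) (M f) \<xi>) \<and>
        l2norm (op_diff (M (fs n)) (M f) \<xi>) \<le> D * (inverse (real (Suc n)) + opnorm (op_diff x (pi_s \<sigma> f))) * l2norm \<xi>"
      using key[OF f xi] by simp
    fix h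
    show "(\<lambda>n. op_diff (M (fs n)) (M f) \<xi> h) \<longlonglongrightarrow> op_diff y (M f) \<xi> h"
      unfolding op_diff_def by (intro tendsto_intros conv xi)
  next
    show "(\<lambda>n. D * (inverse (real (Suc n)) + opnorm (op_diff x (pi_s \<sigma> f))) * l2norm \<xi>)
        \<longlonglongrightarrow> D * (0 + opnorm (op_diff x (pi_s \<sigma> f))) * l2norm \<xi>"
      by (intro tendsto_intros LIMSEQ_inverse_real_of_nat)
  qed
  have f0: "finsupp (fs 0)" by (rule fs(1))
  have ysplit: "y \<xi> = (\<lambda>h. op_diff y (M (fs 0)) \<xi> h + M (fs 0) \<xi> h)" for \<xi>
    unfolding op_diff_def by simp
  have yl2: "l2 (y \<xi>) \<and> l2norm (y \<xi>) \<le> (D * opnorm (op_diff x (pi_s \<sigma> (fs 0))) + opnorm (M (fs 0))) * l2norm \<xi>"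
    if xi: "l2 \<xi>" for \<xi>
  proof -
    have a: "l2 (op_diff y (M (fs 0)) \<xi>)" "l2norm (op_diff y (M (fs 0)) \<xi>) \<le> D * opnorm (op_diff x (pi_s \<sigma> (fs 0))) * l2norm \<xi>"
      using bnd[OF f0 xi] by auto
    have b: "l2 (M (fs 0) \<xi>)" "l2norm (M (fs 0) \<xi>) \<le> opnorm (M (fs 0)) * l2norm \<xi>"
      using bounded_op_l2[OF Mb[OF f0] xi] opnorm_bound[OF Mb[OF f0] xi] by auto
    show ?thesis unfolding ysplit[of \<xi>] using l2_add[OF a(1) b(1)] a(2) b(2) by (simp add: algebra_simps)
  qed
  have ylin: "y (\<lambda>h. \<xi> h + c * \<eta> h) = (\<lambda>h. y \<xi> h + c * y \<eta> h)" if "l2 \<xi>" "l2 \<eta>" for \<xi> \<eta> c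
  proof (intro ext)
    fix h
    have l: "l2 (\<lambda>h. \<xi> h + c * \<eta> h)" using l2_add[OF that(1) conjunct1[OF l2_scale[OF that(2)]]] by simp
    have e: "M (fs n) (\<lambda>h. \<xi> h + c * \<eta> h) h = M (fs n) \<xi> h + c * M (fs n) \<eta> h" for n
      using Mb[OF fs(1)] that unfolding bounded_op_def by metis
    have "(\<lambda>n. M (fs n) (\<lambda>h. \<xi> h + c * \<eta> h) h) \<longlonglongrightarrow> y \<xi> h + c * y \<eta> h"
      unfolding e by (intro tendsto_intros conv that)
    then show "y (\<lambda>h. \<xi> h + c * \<eta> h) h = y \<xi> h + c * y \<eta> h"
      using conv[OF l, of h] LIMSEQ_unique by blast
  qed
  have yb: "bounded_op y"
    by (rule bounded_opI[where C="D * opnorm (op_diff x (pi_s \<sigma> (fs 0))) + opnorm (M (fs 0))"])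
       (use yl2 ylin in auto)
  have "is_Mext \<sigma> \<phi> x y"
    unfolding is_Mext_def
  proof (intro conjI yb allI impI)
    fix \<epsilon> :: real assume e: "0 < \<epsilon>"
    show "\<exists>\<delta>>0. \<forall>f. finsupp f \<longrightarrow> opnorm (op_diff x (pi_s \<sigma> f)) < \<delta> \<longrightarrow>
            opnorm (op_diff y (pi_s \<sigma> (\<lambda>g. \<phi> g * f g))) < \<epsilon>"
    proof (intro exI[of _ "\<epsilon> / (D + 1)"] conjI allI impI)
      show "0 < \<epsilon> / (D + 1)" using e D0 by simp
      fix f assume f: "finsupp f" and d: "opnorm (op_diff x (pi_s \<sigma> f)) < \<epsilon> / (D + 1)"
      have r0: "0 \<le> opnorm (op_diff x (pi_s \<sigma> f))" by (rule opnorm_nonneg[OF bounded_op_diff[OF xb pb[OF f]]])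
      have "opnorm (op_diff y (M f)) \<le> D * opnorm (op_diff x (pi_s \<sigma> f))"
        by (rule opnorm_le) (use bnd[OF f] D0 r0 in auto)
      also have "\<dots> \<le> D * (\<epsilon> / (D + 1))" using d D0 by (intro mult_left_mono) auto
      also have "\<dots> < \<epsilon>" using e D0 by (simp add: field_simps)
      finally show "opnorm (op_diff y (pi_s \<sigma> (\<lambda>g. \<phi> g * f g))) < \<epsilon>" unfolding M_def .
    qed
  qed
  then show ?thesis by blast
qed

lemma Mext_spec:
  assumes "cocycle \<sigma>" "\<phi> \<in> MA \<sigma>" "x \<in> Cr \<sigma>"
  shows "is_Mext \<sigma> \<phi> x (Mext \<sigma> \<phi> x)"
proof -
  obtain D where "0 \<le> D" "\<And>f. finsupp f \<Longrightarrow> opnorm (pi_s \<sigma> (\<lambda>g. \<phi> g * f g)) \<le> D * opnorm (pi_s \<sigma> f)"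
    using MA_const[OF assms(1,2)] by blast
  from Mext_exists[OF assms(1) this assms(3)] show ?thesis unfolding Mext_def by (rule someI_ex)
qed



lemma pi_s_opnorm_sum:
  fixes \<sigma> :: "'g::group_add \<Rightarrow> 'g \<Rightarrow> complex"
  assumes \<sigma>: "cocycle \<sigma>" and h: "finsupp h" and S: "finite S" "{g. h g \<noteq> 0} \<subseteq> S"
  shows "opnorm (pi_s \<sigma> h) \<le> (\<Sum>g\<in>S. cmod (h g))"
proof (rule opnorm_le)
  fix \<xi> :: "'g vec" assume x: "l2 \<xi>"
  have "l2norm (pi_s \<sigma> h \<xi>) \<le> (\<Sum>g\<in>{g. h g \<noteq> 0}. cmod (h g)) * l2norm \<xi>"
    by (rule pi_s_bounded(2)[OF \<sigma> h x])
  also have "\<dots> \<le> (\<Sum>g\<in>S. cmod (h g)) * l2norm \<xi>"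
    using S l2norm_nonneg[of \<xi>] by (intro mult_right_mono sum_mono2) auto
  finally show "l2norm (pi_s \<sigma> h \<xi>) \<le> (\<Sum>g\<in>S. cmod (h g)) * l2norm \<xi>" .
qed (simp add: sum_nonneg)

lemma Mnorm_props:
  fixes \<sigma> :: "'g::group_add \<Rightarrow> 'g \<Rightarrow> complex"
  assumes \<sigma>: "cocycle \<sigma>" and \<phi>: "\<phi> \<in> MA \<sigma>"
  shows "0 \<le> Mnorm \<sigma> \<phi>"
    and "\<And>f. finsupp f \<Longrightarrow> opnorm (pi_s \<sigma> (\<lambda>g. \<phi> g * f g)) \<le> Mnorm \<sigma> \<phi> * opnorm (pi_s \<sigma> f)"
proof -
  obtain D where D0: "0 \<le> D" and D: "\<And>f. finsupp f \<Longrightarrow> opnorm (pi_s \<sigma> (\<lambda>g. \<phi> g * f g)) \<le> D * opnorm (pi_s \<sigma> f)"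
    using MA_const[OF \<sigma> \<phi>] by blast
  let ?S = "{opnorm (pi_s \<sigma> (\<lambda>g. \<phi> g * f g)) | f. finsupp f \<and> opnorm (pi_s \<sigma> f) \<le> 1}"
  have bdd: "bdd_above ?S"
  proof (rule bdd_aboveI[where M=D])
    fix z assume "z \<in> ?S"
    then obtain f where z: "z = opnorm (pi_s \<sigma> (\<lambda>g. \<phi> g * f g))" "finsupp f" "opnorm (pi_s \<sigma> f) \<le> 1" by auto
    have "D * opnorm (pi_s \<sigma> f) \<le> D * 1" using z(3) D0 by (intro mult_left_mono) auto
    then show "z \<le> D" using D[OF z(2)] z(1) by linarith
  qed
  have up: "opnorm (pi_s \<sigma> (\<lambda>g. \<phi> g * f g)) \<le> Mnorm \<sigma> \<phi>" if "finsupp f" "opnorm (pi_s \<sigma> f) \<le> 1" for f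
    unfolding Mnorm_def by (rule cSup_upper[OF _ bdd]) (use that in auto)
  have z0: "finsupp (\<lambda>g::'g. 0::complex)" unfolding finsupp_def by simp
  have zn: "opnorm (\<lambda>\<xi>::'g vec. \<lambda>h::'g. 0::complex) \<le> 0" by (rule opnorm_le) auto
  have "opnorm (pi_s \<sigma> (\<lambda>g::'g. 0)) \<le> 1" unfolding pi_s_zero using zn by simp
  then have "opnorm (pi_s \<sigma> (\<lambda>g. \<phi> g * 0)) \<le> Mnorm \<sigma> \<phi>" using up[OF z0] by simp
  moreover have "0 \<le> opnorm (pi_s \<sigma> (\<lambda>g. \<phi> g * 0))"
    by (rule opnorm_nonneg[OF pi_s_bounded(1)[OF \<sigma> finsupp_mult[OF z0]]])
  ultimately show M0: "0 \<le> Mnorm \<sigma> \<phi>" by linarith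
  fix f :: "'g \<Rightarrow> complex" assume f: "finsupp f"
  define t where "t = opnorm (pi_s \<sigma> f)"
  have pb: "bounded_op (pi_s \<sigma> f)" by (rule pi_s_bounded(1)[OF \<sigma> f])
  have t0: "0 \<le> t" unfolding t_def by (rule opnorm_nonneg[OF pb])
  show "opnorm (pi_s \<sigma> (\<lambda>g. \<phi> g * f g)) \<le> Mnorm \<sigma> \<phi> * opnorm (pi_s \<sigma> f)"
  proof (cases "t = 0")
    case True
    have "l2norm (pi_s \<sigma> f delta0) \<le> t * l2norm (delta0::'g vec)"
      unfolding t_def by (rule opnorm_bound[OF pb conjunct1[OF l2_delta0]])
    then have "l2norm f \<le> 0" using True pi_s_delta[OF \<sigma> f] by simp
    moreover have "l2 f" using bounded_op_l2[OF pb conjunct1[OF l2_delta0]] pi_s_delta[OF \<sigma> f] by simp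
    ultimately have "\<And>g. f g = 0" using l2norm_zero_imp l2norm_nonneg[of f] by (metis order_antisym)
    then have fz: "(\<lambda>g. \<phi> g * f g) = (\<lambda>g. 0)" by simp
    have "opnorm (pi_s \<sigma> (\<lambda>g. \<phi> g * f g)) \<le> 0" unfolding fz pi_s_zero by (rule zn)
    then show ?thesis using True unfolding t_def by simp
  next
    case False
    then have tp: "0 < t" using t0 by simp
    define f' where "f' g = complex_of_real (1/t) * f g" for g
    have f': "finsupp f'" unfolding f'_def by (rule finsupp_mult[OF f])
    have "opnorm (pi_s \<sigma> f') = opnorm (\<lambda>\<xi> h. complex_of_real (1/t) * pi_s \<sigma> f \<xi> h)"
      unfolding f'_def pi_s_scale[OF f] ..
    also have "\<dots> \<le> cmod (complex_of_real (1/t)) * t" unfolding t_def by (rule opnorm_scale_le[OF pb])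
    also have "\<dots> = 1" using tp by (simp add: norm_divide)
    finally have "opnorm (pi_s \<sigma> (\<lambda>g. \<phi> g * f' g)) \<le> Mnorm \<sigma> \<phi>" by (rule up[OF f'])
    have e: "(\<lambda>g. \<phi> g * f g) = (\<lambda>g. complex_of_real t * (\<phi> g * f' g))"
      unfolding f'_def using tp by (auto simp: field_simps)
    have "opnorm (pi_s \<sigma> (\<lambda>g. \<phi> g * f g)) = opnorm (\<lambda>\<xi> h. complex_of_real t * pi_s \<sigma> (\<lambda>g. \<phi> g * f' g) \<xi> h)"
      unfolding e pi_s_scale[OF finsupp_mult[OF f'(1)]] ..
    also have "\<dots> \<le> cmod (complex_of_real t) * opnorm (pi_s \<sigma> (\<lambda>g. \<phi> g * f' g))"
      by (rule opnorm_scale_le[OF pi_s_bounded(1)[OF \<sigma> finsupp_mult[OF f'(1)]]])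
    also have "\<dots> \<le> t * Mnorm \<sigma> \<phi>" using tp \<open>opnorm (pi_s \<sigma> (\<lambda>g. \<phi> g * f' g)) \<le> Mnorm \<sigma> \<phi>\<close>
      by (simp add: mult_left_mono)
    finally show ?thesis unfolding t_def by (simp add: mult.commute)
  qed
qed

lemma Mext_unif:
  assumes \<sigma>: "cocycle \<sigma>" and ext: "is_Mext \<sigma> \<phi> x y" and x: "x \<in> Cr \<sigma>" and C0: "0 \<le> C"
    and C: "\<And>f. finsupp f \<Longrightarrow> opnorm (pi_s \<sigma> (\<lambda>g. \<phi> g * f g)) \<le> C * opnorm (pi_s \<sigma> f)"
    and f: "finsupp f"
  shows "opnorm (op_diff y (pi_s \<sigma> (\<lambda>g. \<phi> g * f g))) \<le> C * opnorm (op_diff x (pi_s \<sigma> f))"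
proof (rule field_le_epsilon)
  fix e :: real assume e: "0 < e"
  have yb: "bounded_op y" using ext unfolding is_Mext_def by blast
  have xb: "bounded_op x" using x unfolding Cr_def by blast
  have e2: "0 < e / 2" using e by simp
  from ext have "\<exists>\<delta>>0. \<forall>f. finsupp f \<longrightarrow> opnorm (op_diff x (pi_s \<sigma> f)) < \<delta> \<longrightarrow>
         opnorm (op_diff y (pi_s \<sigma> (\<lambda>g. \<phi> g * f g))) < e / 2"
    unfolding is_Mext_def using e2 by blast
  then obtain \<delta> where \<delta>: "\<delta> > 0" "\<And>f. finsupp f \<Longrightarrow> opnorm (op_diff x (pi_s \<sigma> f)) < \<delta> \<Longrightarrow>
         opnorm (op_diff y (pi_s \<sigma> (\<lambda>g. \<phi> g * f g))) < e / 2" by blast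
  define \<eta> where "\<eta> = min \<delta> (e / (2 * (C + 1)))"
  have \<eta>0: "0 < \<eta>" unfolding \<eta>_def using \<delta>(1) e C0 by simp
  obtain f' where f': "finsupp f'" "opnorm (op_diff x (pi_s \<sigma> f')) < \<eta>"
    using x \<eta>0 unfolding Cr_def by blast
  let ?Mf = "pi_s \<sigma> (\<lambda>g. \<phi> g * f g)" and ?Mf' = "pi_s \<sigma> (\<lambda>g. \<phi> g * f' g)"
  have Mfb: "bounded_op ?Mf" by (rule pi_s_bounded(1)[OF \<sigma> finsupp_mult[OF f]])
  have Mfb': "bounded_op ?Mf'" by (rule pi_s_bounded(1)[OF \<sigma> finsupp_mult[OF f'(1)]])
  have pf: "bounded_op (pi_s \<sigma> f)" by (rule pi_s_bounded(1)[OF \<sigma> f])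
  have pf': "bounded_op (pi_s \<sigma> f')" by (rule pi_s_bounded(1)[OF \<sigma> f'(1)])
  have t: "opnorm (op_diff y ?Mf) \<le> opnorm (op_diff y ?Mf') + opnorm (op_diff ?Mf' ?Mf)"
    by (rule opnorm_triangle[OF yb Mfb' Mfb])
  have 1: "opnorm (op_diff y ?Mf') < e / 2" using \<delta>(2)[OF f'(1)] f'(2) unfolding \<eta>_def by simp
  have 2: "opnorm (op_diff ?Mf' ?Mf) \<le> C * opnorm (op_diff (pi_s \<sigma> f') (pi_s \<sigma> f))"
    by (rule MA_diff[OF \<sigma> C f'(1) f])
  have 3: "opnorm (op_diff (pi_s \<sigma> f') (pi_s \<sigma> f)) \<le> opnorm (op_diff (pi_s \<sigma> f') x) + opnorm (op_diff x (pi_s \<sigma> f))"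
    by (rule opnorm_triangle[OF pf' xb pf])
  have 4: "opnorm (op_diff (pi_s \<sigma> f') x) \<le> e / (2 * (C + 1))"
    using f'(2) opnorm_sym[of "pi_s \<sigma> f'" x] unfolding \<eta>_def by simp
  have "C * opnorm (op_diff (pi_s \<sigma> f') (pi_s \<sigma> f)) \<le> C * (e / (2 * (C + 1)) + opnorm (op_diff x (pi_s \<sigma> f)))"
    using 3 4 C0 by (intro mult_left_mono) auto
  also have "\<dots> = C * (e / (2 * (C + 1))) + C * opnorm (op_diff x (pi_s \<sigma> f))" by (simp add: distrib_left)
  also have "C * (e / (2 * (C + 1))) \<le> e / 2" using C0 e by (simp add: field_simps)
  finally show "opnorm (op_diff y ?Mf) \<le> C * opnorm (op_diff x (pi_s \<sigma> f)) + e"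
    using t 1 2 by linarith
qed

lemma directed_fin:
  fixes P :: "'a \<Rightarrow> 'i::preorder \<Rightarrow> bool"
  assumes dir: "directed TYPE('i)" and "finite F" "\<forall>g\<in>F. \<exists>a0. \<forall>a\<ge>a0. P g a"
  shows "\<exists>a0. \<forall>a\<ge>a0. \<forall>g\<in>F. P g a"
  using assms(2,3)
proof (induction F rule: finite_induct)
  case empty
  then show ?case by auto
next
  case (insert g F)
  obtain a1 where a1: "\<forall>a\<ge>a1. \<forall>g\<in>F. P g a" using insert by auto
  obtain a2 where a2: "\<forall>a\<ge>a2. P g a" using insert by auto
  obtain c where c: "a1 \<le> c" "a2 \<le> c" using dir unfolding directed_def by blast
  show ?case
  proof (intro exI[of _ c] allI impI ballI)
    fix a g' assume a: "c \<le> a" and g': "g' \<in> insert g F"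
    have "a1 \<le> a" "a2 \<le> a" using c a order_trans by blast+
    then show "P g' a" using a1 a2 g' by blast
  qed
qed



theorem proposition5p8:
  fixes \<sigma> :: "'g::group_add \<Rightarrow> 'g \<Rightarrow> complex"
    and \<phi> :: "'i::preorder \<Rightarrow> 'g \<Rightarrow> complex"
  assumes "cocycle \<sigma>"
    and "directed TYPE('i)"
    and "\<forall>\<alpha>. \<phi> \<alpha> \<in> MA \<sigma>"
    and "\<forall>g. \<forall>\<epsilon>>0. \<exists>\<alpha>0. \<forall>\<alpha>\<ge>\<alpha>0. cmod (\<phi> \<alpha> g - 1) < \<epsilon>"
    and "\<exists>C. \<forall>\<alpha>. Mnorm \<sigma> (\<phi> \<alpha>) \<le> C"
    and "\<forall>\<alpha>. \<exists>\<kappa>::'g \<Rightarrow> real. (\<forall>g. \<kappa> g \<ge> 1) \<and> kappa_decaying \<kappa> \<and>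
           (\<exists>C. \<forall>g. cmod (\<phi> \<alpha> g) * \<kappa> g \<le> C)"
  shows "bounded_fourier_summing_net \<sigma> \<phi>"
proof -
  note \<sigma> = assms(1)
  have MAa: "\<And>\<alpha>. \<phi> \<alpha> \<in> MA \<sigma>" using assms(3) by blast
  obtain C0 where C0: "\<And>\<alpha>. Mnorm \<sigma> (\<phi> \<alpha>) \<le> C0" using assms(5) by blast
  define C where "C = max C0 0"
  have C_nn: "0 \<le> C" unfolding C_def by simp
  have pb: "\<And>f. finsupp f \<Longrightarrow> bounded_op (pi_s \<sigma> f)" using pi_s_bounded(1)[OF \<sigma>] by blast
  have unif: "opnorm (pi_s \<sigma> (\<lambda>g. \<phi> \<alpha> g * f g)) \<le> C * opnorm (pi_s \<sigma> f)" if f: "finsupp f" for \<alpha> f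
  proof -
    have "opnorm (pi_s \<sigma> (\<lambda>g. \<phi> \<alpha> g * f g)) \<le> Mnorm \<sigma> (\<phi> \<alpha>) * opnorm (pi_s \<sigma> f)"
      by (rule Mnorm_props(2)[OF \<sigma> MAa f])
    also have "\<dots> \<le> C * opnorm (pi_s \<sigma> f)"
      using C0[of \<alpha>] opnorm_nonneg[OF pb[OF f]] unfolding C_def by (intro mult_right_mono) auto
    finally show ?thesis .
  qed
  have extM: "\<And>\<alpha> x. x \<in> Cr \<sigma> \<Longrightarrow> is_Mext \<sigma> (\<phi> \<alpha>) x (Mext \<sigma> (\<phi> \<alpha>) x)"
    using Mext_spec[OF \<sigma> MAa] by blast
  have extb: "\<And>\<alpha> x. x \<in> Cr \<sigma> \<Longrightarrow> bounded_op (Mext \<sigma> (\<phi> \<alpha>) x)"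
    using extM unfolding is_Mext_def by blast
  have xbd: "\<And>x. x \<in> Cr \<sigma> \<Longrightarrow> bounded_op x" unfolding Cr_def by blast
  have approx: "\<And>x e. x \<in> Cr \<sigma> \<Longrightarrow> 0 < e \<Longrightarrow> \<exists>f. finsupp f \<and> opnorm (op_diff x (pi_s \<sigma> f)) < e"
    unfolding Cr_def by blast

  have MCF: "\<phi> \<alpha> \<in> MCF \<sigma>" for \<alpha>
    unfolding MCF_def
  proof (intro CollectI ballI)
    fix x assume x: "x \<in> Cr \<sigma>"
    define y where "y = Mext \<sigma> (\<phi> \<alpha>) x"
    have yb: "bounded_op y" unfolding y_def by (rule extb[OF x])
    have xb: "bounded_op x" by (rule xbd[OF x])
    obtain \<kappa> where \<kappa>: "\<And>g. \<kappa> g \<ge> 1" "kappa_decaying \<kappa>" and "\<exists>B. \<forall>g. cmod (\<phi> \<alpha> g) * \<kappa> g \<le> B"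
      using assms(6) by blast
    then obtain B where B: "\<And>g. cmod (\<phi> \<alpha> g) * \<kappa> g \<le> B" by blast
    obtain K where K: "\<And>f. finsupp f \<Longrightarrow> opnorm (pi_s (\<lambda>_ _. 1) f) \<le> K * l2norm (\<lambda>g. f g * complex_of_real (\<kappa> g))"
      using \<kappa>(2) unfolding kappa_decaying_def by blast
    show "\<exists>y. bounded_op y \<and> (\<forall>\<epsilon>>0. \<exists>F. finite F \<and> (\<forall>F'. finite F' \<and> F \<subseteq> F' \<longrightarrow>
      opnorm (op_diff y (\<lambda>\<xi> h. \<Sum>g\<in>F'. \<phi> \<alpha> g * hat x g * Lambda \<sigma> g \<xi> h)) < \<epsilon>))"
    proof (intro exI[of _ y] conjI allI impI yb)
      fix \<epsilon> :: real assume e: "0 < \<epsilon>"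
      have e2: "0 < \<epsilon> / 2" using e by simp
      from extM[OF x, of \<alpha>] have "\<exists>\<delta>>0. \<forall>f. finsupp f \<longrightarrow> opnorm (op_diff x (pi_s \<sigma> f)) < \<delta> \<longrightarrow>
         opnorm (op_diff y (pi_s \<sigma> (\<lambda>g. \<phi> \<alpha> g * f g))) < \<epsilon> / 2"
        unfolding is_Mext_def y_def using e2 by blast
      then obtain \<delta> where \<delta>: "\<delta> > 0" "\<And>f. finsupp f \<Longrightarrow> opnorm (op_diff x (pi_s \<sigma> f)) < \<delta> \<Longrightarrow>
         opnorm (op_diff y (pi_s \<sigma> (\<lambda>g. \<phi> \<alpha> g * f g))) < \<epsilon> / 2" by blast
      define KB where "KB = \<bar>K\<bar> * \<bar>B\<bar>"
      have KB0: "0 \<le> KB" unfolding KB_def by simp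
      define \<eta> where "\<eta> = min \<delta> (\<epsilon> / (2 * (KB + 1)))"
      have \<eta>0: "0 < \<eta>" unfolding \<eta>_def using \<delta>(1) e KB0 by simp
      obtain f where f: "finsupp f" "opnorm (op_diff x (pi_s \<sigma> f)) < \<eta>" using approx[OF x \<eta>0] by blast
      show "\<exists>F. finite F \<and> (\<forall>F'. finite F' \<and> F \<subseteq> F' \<longrightarrow>
          opnorm (op_diff y (\<lambda>\<xi> h. \<Sum>g\<in>F'. \<phi> \<alpha> g * hat x g * Lambda \<sigma> g \<xi> h)) < \<epsilon>)"
      proof (intro exI[of _ "{g. f g \<noteq> 0}"] conjI allI impI)
        show "finite {g. f g \<noteq> 0}" using f(1) unfolding finsupp_def .
        fix F' assume F': "finite F' \<and> {g. f g \<noteq> 0} \<subseteq> F'"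
        define a where "a g = (if g \<in> F' then \<phi> \<alpha> g * hat x g else 0)" for g
        have fa: "finsupp a" unfolding finsupp_def a_def by (rule finite_subset[of _ F']) (use F' in auto)
        have ps: "(\<lambda>\<xi> h. \<Sum>g\<in>F'. \<phi> \<alpha> g * hat x g * Lambda \<sigma> g \<xi> h) = pi_s \<sigma> a"
        proof (intro ext)
          fix \<xi> h
          have "pi_s \<sigma> a \<xi> h = (\<Sum>g\<in>F'. a g * Lambda \<sigma> g \<xi> h)"
            by (rule pi_s_eq[OF fa]) (use F' in \<open>auto simp: a_def\<close>)
          also have "\<dots> = (\<Sum>g\<in>F'. \<phi> \<alpha> g * hat x g * Lambda \<sigma> g \<xi> h)"
            by (rule sum.cong) (auto simp: a_def)
          finally show "(\<Sum>g\<in>F'. \<phi> \<alpha> g * hat x g * Lambda \<sigma> g \<xi> h) = pi_s \<sigma> a \<xi> h" by simp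
        qed
        let ?Mf = "pi_s \<sigma> (\<lambda>g. \<phi> \<alpha> g * f g)"
        have Mfb: "bounded_op ?Mf" by (rule pb[OF finsupp_mult[OF f(1)]])
        have t: "opnorm (op_diff y (pi_s \<sigma> a)) \<le> opnorm (op_diff y ?Mf) + opnorm (op_diff ?Mf (pi_s \<sigma> a))"
          by (rule opnorm_triangle[OF yb Mfb pb[OF fa]])
        have 1: "opnorm (op_diff y ?Mf) < \<epsilon> / 2" using \<delta>(2)[OF f(1)] f(2) unfolding \<eta>_def by simp
        define d where "d k = \<phi> \<alpha> k * f k - a k" for k
        have fd: "finsupp d" unfolding d_def by (rule finsupp_diff[OF finsupp_mult[OF f(1)] fa])
        have 2: "op_diff ?Mf (pi_s \<sigma> a) = pi_s \<sigma> d" unfolding d_def by (rule pi_s_diff[OF finsupp_mult[OF f(1)] fa])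
        define d1 where "d1 g = complex_of_real (cmod (d g))" for g
        have fd1: "finsupp d1" using fd unfolding finsupp_def d1_def by simp
        have 3: "opnorm (pi_s \<sigma> d) \<le> opnorm (pi_s (\<lambda>_ _. 1) d1)" unfolding d1_def by (rule pi_s_abs[OF \<sigma> fd])
        have 4: "opnorm (pi_s (\<lambda>_ _. 1) d1) \<le> \<bar>K\<bar> * l2norm (\<lambda>g. d1 g * complex_of_real (\<kappa> g))"
        proof -
          have "K * l2norm (\<lambda>g. d1 g * complex_of_real (\<kappa> g)) \<le> \<bar>K\<bar> * l2norm (\<lambda>g. d1 g * complex_of_real (\<kappa> g))"
            using l2norm_nonneg[of "\<lambda>g. d1 g * complex_of_real (\<kappa> g)"] by (intro mult_right_mono) auto
          then show ?thesis using K[OF fd1] by linarith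
        qed
        define e0 where "e0 g = f g - hat x g" for g
        have hx: "hat x = x delta0" unfolding hat_def delta0_def ..
        have DB: "bounded_op (op_diff (pi_s \<sigma> f) x)" by (rule bounded_op_diff[OF pb[OF f(1)] xb])
        have e0eq: "e0 = op_diff (pi_s \<sigma> f) x delta0"
          unfolding e0_def op_diff_def hx pi_s_delta[OF \<sigma> f(1)] ..
        have e0l2: "l2 e0" unfolding e0eq by (rule bounded_op_l2[OF DB conjunct1[OF l2_delta0]])
        have "l2norm e0 \<le> opnorm (op_diff (pi_s \<sigma> f) x) * l2norm (delta0::'g vec)"
          unfolding e0eq by (rule opnorm_bound[OF DB conjunct1[OF l2_delta0]])
        also have "\<dots> \<le> opnorm (op_diff (pi_s \<sigma> f) x) * 1"
          by (rule mult_left_mono[OF conjunct2[OF l2_delta0] opnorm_nonneg[OF DB]])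
        finally have e0n: "l2norm e0 \<le> opnorm (op_diff x (pi_s \<sigma> f))" using opnorm_sym[of "pi_s \<sigma> f" x] by simp
        have pt: "cmod (d1 g * complex_of_real (\<kappa> g)) \<le> \<bar>B\<bar> * cmod (e0 g)" for g
        proof (cases "g \<in> F'")
          case True
          have dg: "d g = \<phi> \<alpha> g * e0 g" unfolding d_def a_def e0_def using True by (simp add: algebra_simps)
          have k0: "0 \<le> \<kappa> g" using \<kappa>(1)[of g] by simp
          have "cmod (d1 g * complex_of_real (\<kappa> g)) = (cmod (\<phi> \<alpha> g) * \<kappa> g) * cmod (e0 g)"
            unfolding d1_def dg using k0 by (simp add: norm_mult)
          also have "\<dots> \<le> \<bar>B\<bar> * cmod (e0 g)" using B[of g] by (intro mult_right_mono) auto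
          finally show ?thesis .
        next
          case False
          then have "f g = 0" using F' by auto
          then have "d g = 0" unfolding d_def a_def using False by simp
          then show ?thesis unfolding d1_def by simp
        qed
        have 5: "l2norm (\<lambda>g. d1 g * complex_of_real (\<kappa> g)) \<le> \<bar>B\<bar> * l2norm e0"
          using l2_mono[OF e0l2 pt] by simp
        have "opnorm (op_diff ?Mf (pi_s \<sigma> a)) \<le> \<bar>K\<bar> * (\<bar>B\<bar> * l2norm e0)"
          unfolding 2 using 3 4 5 by (meson abs_ge_zero mult_left_mono order_trans)
        also have "\<dots> \<le> \<bar>K\<bar> * (\<bar>B\<bar> * opnorm (op_diff x (pi_s \<sigma> f)))"
          using e0n by (intro mult_left_mono) auto
        also have "\<dots> = KB * opnorm (op_diff x (pi_s \<sigma> f))" unfolding KB_def by simp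
        also have "\<dots> \<le> KB * (\<epsilon> / (2 * (KB + 1)))"
          using f(2) KB0 unfolding \<eta>_def by (intro mult_left_mono) auto
        also have "\<dots> \<le> \<epsilon> / 2" using KB0 e by (simp add: field_simps)
        finally have 6: "opnorm (op_diff ?Mf (pi_s \<sigma> a)) \<le> \<epsilon> / 2" .
        show "opnorm (op_diff y (\<lambda>\<xi> h. \<Sum>g\<in>F'. \<phi> \<alpha> g * hat x g * Lambda \<sigma> g \<xi> h)) < \<epsilon>"
          unfolding ps using t 1 6 by linarith
      qed
    qed
  qed

  have conv: "\<forall>x\<in>Cr \<sigma>. \<forall>\<epsilon>>0. \<exists>\<alpha>0. \<forall>\<alpha>\<ge>\<alpha>0. opnorm (op_diff (Mext \<sigma> (\<phi> \<alpha>) x) x) < \<epsilon>"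
  proof (intro ballI allI impI)
    fix x and \<epsilon> :: real assume x: "x \<in> Cr \<sigma>" and e: "0 < \<epsilon>"
    have xb: "bounded_op x" by (rule xbd[OF x])
    define \<eta> where "\<eta> = \<epsilon> / (3 * (C + 1))"
    have \<eta>0: "0 < \<eta>" unfolding \<eta>_def using e C_nn by simp
    obtain f where f: "finsupp f" "opnorm (op_diff x (pi_s \<sigma> f)) < \<eta>" using approx[OF x \<eta>0] by blast
    define S where "S = {g. f g \<noteq> 0}"
    have finS: "finite S" using f(1) unfolding S_def finsupp_def .
    define s where "s = (\<Sum>g\<in>S. cmod (f g))"
    have s0: "0 \<le> s" unfolding s_def by (simp add: sum_nonneg)
    define \<epsilon>1 where "\<epsilon>1 = \<epsilon> / (3 * (s + 1))"
    have e1: "0 < \<epsilon>1" unfolding \<epsilon>1_def using e s0 by simp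
    have "\<forall>g\<in>S. \<exists>\<alpha>0. \<forall>\<alpha>\<ge>\<alpha>0. cmod (\<phi> \<alpha> g - 1) < \<epsilon>1" using assms(4) e1 by blast
    then have "\<exists>\<alpha>0. \<forall>\<alpha>\<ge>\<alpha>0. \<forall>g\<in>S. cmod (\<phi> \<alpha> g - 1) < \<epsilon>1"
      by (rule directed_fin[OF assms(2) finS, where P="\<lambda>g \<alpha>. cmod (\<phi> \<alpha> g - 1) < \<epsilon>1"])
    then obtain \<alpha>0 where \<alpha>0: "\<forall>\<alpha>\<ge>\<alpha>0. \<forall>g\<in>S. cmod (\<phi> \<alpha> g - 1) < \<epsilon>1" by blast
    show "\<exists>\<alpha>0. \<forall>\<alpha>\<ge>\<alpha>0. opnorm (op_diff (Mext \<sigma> (\<phi> \<alpha>) x) x) < \<epsilon>"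
    proof (intro exI[of _ \<alpha>0] allI impI)
      fix \<alpha> assume \<alpha>: "\<alpha>0 \<le> \<alpha>"
      define y where "y = Mext \<sigma> (\<phi> \<alpha>) x"
      let ?Mf = "pi_s \<sigma> (\<lambda>g. \<phi> \<alpha> g * f g)"
      have yb: "bounded_op y" unfolding y_def by (rule extb[OF x])
      have Mfb: "bounded_op ?Mf" by (rule pb[OF finsupp_mult[OF f(1)]])
      have pfb: "bounded_op (pi_s \<sigma> f)" by (rule pb[OF f(1)])
      have t1: "opnorm (op_diff y x) \<le> opnorm (op_diff y ?Mf) + opnorm (op_diff ?Mf x)"
        by (rule opnorm_triangle[OF yb Mfb xb])
      have t2: "opnorm (op_diff ?Mf x) \<le> opnorm (op_diff ?Mf (pi_s \<sigma> f)) + opnorm (op_diff (pi_s \<sigma> f) x)"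
        by (rule opnorm_triangle[OF Mfb pfb xb])
      have a1: "opnorm (op_diff y ?Mf) \<le> C * opnorm (op_diff x (pi_s \<sigma> f))"
        unfolding y_def by (rule Mext_unif[OF \<sigma> extM[OF x] x C_nn unif f(1)])
      have a1': "C * opnorm (op_diff x (pi_s \<sigma> f)) \<le> C * \<eta>" using f(2) C_nn by (intro mult_left_mono) auto
      define d where "d k = \<phi> \<alpha> k * f k - f k" for k
      have fd: "finsupp d" unfolding d_def by (rule finsupp_diff[OF finsupp_mult[OF f(1)] f(1)])
      have eqd: "op_diff ?Mf (pi_s \<sigma> f) = pi_s \<sigma> d" unfolding d_def by (rule pi_s_diff[OF finsupp_mult[OF f(1)] f(1)])
      have "opnorm (op_diff ?Mf (pi_s \<sigma> f)) = opnorm (pi_s \<sigma> d)" unfolding eqd ..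
      also have "opnorm (pi_s \<sigma> d) \<le> (\<Sum>g\<in>S. cmod (d g))"
        by (rule pi_s_opnorm_sum[OF \<sigma> fd finS]) (auto simp: S_def d_def)
      also have "\<dots> = (\<Sum>g\<in>S. cmod (\<phi> \<alpha> g - 1) * cmod (f g))"
        unfolding d_def by (rule sum.cong) (auto simp: norm_mult[symmetric] algebra_simps)
      also have "\<dots> \<le> (\<Sum>g\<in>S. \<epsilon>1 * cmod (f g))"
      proof (intro sum_mono mult_right_mono)
        fix g assume "g \<in> S"
        then have "cmod (\<phi> \<alpha> g - 1) < \<epsilon>1" using \<alpha>0 \<alpha> by blast
        then show "cmod (\<phi> \<alpha> g - 1) \<le> \<epsilon>1" by simp
      qed simp
      also have "\<dots> = \<epsilon>1 * s" unfolding s_def by (simp add: sum_distrib_left)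
      also have "\<dots> < \<epsilon> / 3" unfolding \<epsilon>1_def using s0 e by (simp add: field_simps)
      finally have a2: "opnorm (op_diff ?Mf (pi_s \<sigma> f)) < \<epsilon> / 3" .
      have a3: "opnorm (op_diff (pi_s \<sigma> f) x) < \<eta>" using f(2) opnorm_sym[of "pi_s \<sigma> f" x] by simp
      have ce: "(C + 1) * \<eta> = \<epsilon> / 3" unfolding \<eta>_def using C_nn by (simp add: field_simps)
      have "C * \<eta> + \<eta> = (C + 1) * \<eta>" by (simp add: algebra_simps)
      then have "C * \<eta> + \<eta> = \<epsilon> / 3" using ce by simp
      then show "opnorm (op_diff (Mext \<sigma> (\<phi> \<alpha>) x) x) < \<epsilon>"
        using t1 t2 a1 a1' a2 a3 e unfolding y_def by linarith
    qed
  qed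
  show ?thesis
    unfolding bounded_fourier_summing_net_def fourier_summing_net_def using MCF conv assms(5) by blast
qed


end
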